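(* Let $n\ge1$ and suppose that for every $0\le k<n$, $\mathbb{Z}_k$ is a $1$-Gray code for $\mathcal{Z}_k$ with $\mathrm{first}(\mathbb{Z}_k)=0(001)^\star$ and $\mathrm{last}(\mathbb{Z}_k)=(001)^\star$ (where $\mathbb{Z}_0=(\epsilon)$). Let $i,j$ be integers with $1\le j<i\le n$. Then: (i) if $3\le i+j<n$, the list $\mathbb{L}=0^i1^j\cdot\mathbb{Z}_{n-i-j}$ is a $1$-Gray code for $0^i1^j\cdot\mathcal{Z}_{n-i-j}$ with $\mathrm{first}(\mathbb{L})=0^i1^j0(001)^\star$ and $\mathrm{last}(\mathbb{L})=0^i1^j(001)^\star$; when $i+j=n$ the list $\mathbb{L}$ contains only the word $0^i1^j$; (ii) if $3\le i+j<n-1$, the list $\mathbb{L}=0^i1^{j+1}\cdot\mathbb{Z}_{n-i-j-1}\circ0^i1^j\cdot\mathbb{Z}_{n-i-j}$ is a $1$-Gray code for $0^i1^{j+1}\cdot\mathcal{Z}_{n-i-j-1}\cup0^i1^j\cdot\mathcal{Z}_{n-i-j}$ with $\mathrm{first}(\mathbb{L})=0^i1^{j+1}0(001)^\star$ and $\mathrm{last}(\mathbb{L})=0^i1^j(001)^\star$; when $i+j+1=n$, $\mathbb{L}=0^i1^{j+1}\circ0^i1^j0$; (iii) if $3\le i+j<n$, the list $\mathbb{L}=0^i1^j\cdot\mathbb{Z}_{n-i-j}\circ\overline{0^{i-1}1^{j+1}\cdot\mathbb{Z}_{n-i-j}}$ is a $1$-Gray code for $0^i1^j\cdot\mathcal{Z}_{n-i-j}\cup0^{i-1}1^{j+1}\cdot\mathcal{Z}_{n-i-j}$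 with $\mathrm{first}(\mathbb{L})=0^i1^j0(001)^\star$ and $\mathrm{last}(\mathbb{L})=0^{i-1}1^{j+1}0(001)^\star$; when $i+j=n$, $\mathbb{L}=0^i1^j\circ0^{i-1}1^{j+1}$; (iv) if $3\le i+j\le n$, the list $\mathbb{L}=\overline{0^i1^j\cdot\mathbb{Z}_{n-i-j}}\circ0^{i-1}1^{j+1}\cdot\mathbb{Z}_{n-i-j}$ is a $1$-Gray code for $0^i1^j\cdot\mathcal{Z}_{n-i-j}\cup0^{i-1}1^{j+1}\cdot\mathcal{Z}_{n-i-j}$ with $\mathrm{first}(\mathbb{L})=0^i1^j(001)^\star$ and $\mathrm{last}(\mathbb{L})=0^{i-1}1^{j+1}(001)^\star$.
   Context: A binary word is $1$-decreasing if for every maximal run of $0$s, of length $a>0$, together with the (possibly empty) maximal run of $1$s immediately following it, of length $b$, one has $a>b$. For $m\ge1$, $\mathcal{Z}_m$ is the set of $1$-decreasing words of length $m$ starting with $0$; $\mathcal{Z}_0=\{\epsilon\}$. A $1$-Gray code for a set of equal-length words is an ordered list of all its elements, each once, with consecutive words differing in at most one position. For a list $\mathbb{L}$ and a word $w$: $w\cdot\mathbb{L}$ prefixes $w$ to every word of $\mathbb{L}$ (and $w\cdot\mathcal{A}=\{wa:a\in\mathcal{A}\}$ for sets); $\circ$ is list concatenation; $\overline{\mathbb{L}}$ is the reverse list; $\mathrm{first}(\mathbb{L})$, $\mathrm{last}(\mathbb{L})$ are its first and last elements. In a word of prescribed length (here $n$) written $u(001)^\star$, $(001)^\star$ denotes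 the prefix of $001001\cdots$ of the length needed to reach that total length. *)

theory Defs
  imports Main
begin

text \<open>Binary words are bool lists: False stands for the letter 0, True for 1.\<close>

definition zeros :: "nat \<Rightarrow> bool list" where "zeros k = replicate k False"
definition ones :: "nat \<Rightarrow> bool list" where "ones k = replicate k True"

text \<open>1-decreasing: every maximal run of 0s (starting at position p, length a > 0)
  followed by the maximal (possibly empty) run of 1s (length b) satisfies a > b.\<close>
definition one_decreasing :: "bool list \<Rightarrow> bool" where
  "one_decreasing w \<longleftrightarrow>
     (\<forall>p a b. 0 < a \<and> p + a + b \<le> length w
        \<and> (p = 0 \<or> w ! (p - 1))
        \<and> (\<forall>k<a. \<not> w ! (p + k))
        \<and> (p + a = length w \<or> w ! (p + a))
        \<and> (\<forall>k<b. w ! (p + a + k))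
        \<and> (p + a + b = length w \<or> \<not> w ! (p + a + b))
        \<longrightarrow> b < a)"

definition Zset :: "nat \<Rightarrow> bool list set" where
  "Zset m = {w. length w = m \<and> (m \<ge> 1 \<longrightarrow> hd w = False) \<and> one_decreasing w}"

definition pat001 :: "nat \<Rightarrow> bool list" where
  "pat001 m = map (\<lambda>k. k mod 3 = 2) [0..<m]"

definition prefix_set :: "bool list \<Rightarrow> bool list set \<Rightarrow> bool list set" where
  "prefix_set u A = (\<lambda>a. u @ a) ` A"

definition prefix_list :: "bool list \<Rightarrow> bool list list \<Rightarrow> bool list list" where
  "prefix_list u L = map (\<lambda>a. u @ a) L"

definition differ_at_most_one :: "bool list \<Rightarrow> bool list \<Rightarrow> bool" where
  "differ_at_most_one u v \<longleftrightarrow>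
     length u = length v \<and> card {p. p < length u \<and> u ! p \<noteq> v ! p} \<le> 1"

definition gray1 :: "bool list list \<Rightarrow> bool list set \<Rightarrow> bool" where
  "gray1 L S \<longleftrightarrow> distinct L \<and> set L = S \<and>
     (\<forall>k. Suc k < length L \<longrightarrow> differ_at_most_one (L ! k) (L ! Suc k))"

end

theory Submission
  imports Defs
begin
definition dif1 :: "bool list \<Rightarrow> bool list \<Rightarrow> bool" where
  "dif1 u v \<longleftrightarrow> length u = length v \<and> (\<exists>q. \<forall>p<length u. p \<noteq> q \<longrightarrow> u ! p = v ! p)"

lemma card_le1_iff: "finite S \<Longrightarrow> card S \<le> 1 \<longleftrightarrow> (\<exists>q. S \<subseteq> {q})"
proof -
  assume fin: "finite S"
  have "card S \<le> 1 \<longleftrightarrow> (\<forall>a1\<in>S. \<forall>a2\<in>S. a1 = a2)"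
    using card_le_Suc0_iff_eq[OF fin] by simp
  also have "\<dots> \<longleftrightarrow> (\<exists>q. S \<subseteq> {q})"
  proof
    assume h: "\<forall>a1\<in>S. \<forall>a2\<in>S. a1 = a2"
    show "\<exists>q. S \<subseteq> {q}"
    proof (cases "S = {}")
      case True then show ?thesis by blast
    next
      case False
      then obtain q where "q \<in> S" by blast
      then have "S \<subseteq> {q}" using h by blast
      then show ?thesis by blast
    qed
  next
    assume "\<exists>q. S \<subseteq> {q}"
    then show "\<forall>a1\<in>S. \<forall>a2\<in>S. a1 = a2" by blast
  qed
  finally show ?thesis .
qed

lemma differ_dif1: "differ_at_most_one u v = dif1 u v"
proof -
  have fin: "finite {p. p < length u \<and> u ! p \<noteq> v ! p}" by simp
  have "(\<exists>q. {p. p < length u \<and> u ! p \<noteq> v ! p} \<subseteq> {q}) \<longleftrightarrow>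
        (\<exists>q. \<forall>p<length u. p \<noteq> q \<longrightarrow> u ! p = v ! p)" by blast
  then show ?thesis
    unfolding differ_at_most_one_def dif1_def card_le1_iff[OF fin] by simp
qed

lemma gray1_alt: "gray1 L S \<longleftrightarrow> distinct L \<and> set L = S \<and> successively dif1 L"
  unfolding gray1_def successively_conv_nth differ_dif1 by simp

lemma dif1_sym: "dif1 u v \<Longrightarrow> dif1 v u"
proof -
  assume "dif1 u v"
  then obtain q where "length u = length v" "\<And>p. p<length u \<Longrightarrow> p \<noteq> q \<Longrightarrow> u ! p = v ! p"
    unfolding dif1_def by blast
  then show ?thesis unfolding dif1_def by (intro conjI exI[of _ q]) auto
qed

lemma dif1_prefix: "dif1 a b \<Longrightarrow> dif1 (u @ a) (u @ b)"
proof -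
  assume "dif1 a b"
  then obtain q where l: "length a = length b" and q: "\<And>p. p<length a \<Longrightarrow> p \<noteq> q \<Longrightarrow> a ! p = b ! p"
    unfolding dif1_def by blast
  have "(u @ a) ! p = (u @ b) ! p" if "p < length (u @ a)" "p \<noteq> length u + q" for p
  proof (cases "p < length u")
    case True then show ?thesis by (simp add: nth_append)
  next
    case False
    then have "a ! (p - length u) = b ! (p - length u)" using that by (intro q) auto
    then show ?thesis using False by (simp add: nth_append)
  qed
  then show ?thesis unfolding dif1_def using l by auto
qed

lemma dif1_mid: "dif1 (x @ [a] @ y) (x @ [b] @ y)"
proof -
  have "(x @ [a] @ y) ! p = (x @ [b] @ y) ! p" if "p \<noteq> length x" for p
  proof (cases "p < length x")
    case True then show ?thesis by (simp only: nth_append_left append_Cons append_Nil)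
  next
    case False
    then have "length x < p" using that by simp
    then obtain r where "p = length x + Suc r"
      using less_imp_Suc_add[of "length x" p] by auto
    then show ?thesis by (simp only: nth_append_length_plus append_Cons append_Nil nth_Cons_Suc)
  qed
  then show ?thesis unfolding dif1_def by (intro conjI exI[of _ "length x"]) auto
qed

lemma gray1_prefix: "gray1 L S \<Longrightarrow> gray1 (prefix_list u L) (prefix_set u S)"
  unfolding gray1_alt prefix_list_def prefix_set_def
  by (auto simp: distinct_map successively_map inj_on_def dif1_prefix elim: successively_mono)

lemma gray1_rev: "gray1 L S \<Longrightarrow> gray1 (rev L) S"
  unfolding gray1_alt by (auto simp: dif1_sym elim: successively_mono)

lemma gray1_append: "gray1 A S \<Longrightarrow> gray1 B T \<Longrightarrow> S \<inter> T = {} \<Longrightarrow>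
   (A \<noteq> [] \<Longrightarrow> B \<noteq> [] \<Longrightarrow> dif1 (last A) (hd B)) \<Longrightarrow> gray1 (A @ B) (S \<union> T)"
  unfolding gray1_alt by (auto simp: successively_append_iff)

lemma zeros_in: "zeros m \<in> Zset m"
proof -
  have "one_decreasing (zeros m)"
    unfolding one_decreasing_def
  proof (intro allI impI)
    fix p a b :: nat
    assume h: "0 < a \<and> p + a + b \<le> length (zeros m)
        \<and> (p = 0 \<or> zeros m ! (p - 1))
        \<and> (\<forall>k<a. \<not> zeros m ! (p + k))
        \<and> (p + a = length (zeros m) \<or> zeros m ! (p + a))
        \<and> (\<forall>k<b. zeros m ! (p + a + k))
        \<and> (p + a + b = length (zeros m) \<or> \<not> zeros m ! (p + a + b))"
    have "b = 0"
    proof (rule ccontr)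
      assume "b \<noteq> 0"
      then have "zeros m ! (p + a + 0)" using h by blast
      moreover have "p + a + 0 < m" using h \<open>b \<noteq> 0\<close> by (simp add: zeros_def)
      ultimately show False by (simp add: zeros_def)
    qed
    then show "b < a" using h by simp
  qed
  moreover have "m \<ge> 1 \<Longrightarrow> hd (zeros m) = False" unfolding zeros_def by (cases m) auto
  moreover have "length (zeros m) = m" by (simp add: zeros_def)
  ultimately show ?thesis unfolding Zset_def by blast
qed

lemma Zl_ne: "gray1 L (Zset k) \<Longrightarrow> L \<noteq> []"
  using zeros_in[of k] unfolding gray1_def by auto

lemma Zset_len: "w \<in> Zset m \<Longrightarrow> length w = m"
  unfolding Zset_def by auto

lemma Zset_hd: "w \<in> Zset m \<Longrightarrow> m \<ge> 1 \<Longrightarrow> w = False # tl w"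
  unfolding Zset_def by (cases w) auto

lemma Zset1: "Zset 1 = {[False]}"
proof
  show "Zset 1 \<subseteq> {[False]}"
  proof
    fix w assume w: "w \<in> Zset 1"
    then have "length w = 1" by (rule Zset_len)
    moreover have "w = False # tl w" using w by (rule Zset_hd) simp
    ultimately show "w \<in> {[False]}" by (cases w) auto
  qed
  show "{[False]} \<subseteq> Zset 1" using zeros_in[of 1] by (simp add: zeros_def)
qed

lemma hd_pl: "L \<noteq> [] \<Longrightarrow> hd (prefix_list u L) = u @ hd L"
  unfolding prefix_list_def by (cases L) auto

lemma last_pl: "L \<noteq> [] \<Longrightarrow> last (prefix_list u L) = u @ last L"
  unfolding prefix_list_def by (simp add: last_map)

lemma ne_pl: "L \<noteq> [] \<Longrightarrow> prefix_list u L \<noteq> []"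
  unfolding prefix_list_def by simp

lemma disj_same_len: "length u1 = length u2 \<Longrightarrow> u1 \<noteq> u2 \<Longrightarrow>
   prefix_set u1 A \<inter> prefix_set u2 B = {}"
  unfolding prefix_set_def by auto

lemma zo_split: "i \<ge> 1 \<Longrightarrow> zeros i @ ones j @ y = zeros (i - 1) @ [False] @ (ones j @ y)
   \<and> zeros (i - 1) @ ones (j + 1) @ y = zeros (i - 1) @ [True] @ (ones j @ y)"
proof -
  assume "i \<ge> 1"
  then obtain k where k: "i = Suc k" by (cases i) auto
  show ?thesis unfolding k zeros_def ones_def
    by (simp add: replicate_app_Cons_same)
qed

lemma ones_Suc: "ones (j + 1) = ones j @ [True]"
  unfolding ones_def by (simp add: replicate_append_same)

lemma pl_single: "prefix_list u [[]] = [u]"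
  unfolding prefix_list_def by simp

theorem lemma3:
  fixes n i j :: nat and Zl :: "nat \<Rightarrow> bool list list"
  assumes n: "n \<ge> 1"
    and Z0: "Zl 0 = [[]]"
    and Zg: "\<And>k. k < n \<Longrightarrow> gray1 (Zl k) (Zset k)"
    and Zfl: "\<And>k. 1 \<le> k \<Longrightarrow> k < n \<Longrightarrow>
                 hd (Zl k) = False # pat001 (k - 1) \<and> last (Zl k) = pat001 k"
    and ij: "1 \<le> j" "j < i" "i \<le> n"
  shows
   "(3 \<le> i + j \<and> i + j < n \<longrightarrow>
       (let L = prefix_list (zeros i @ ones j) (Zl (n - i - j)) in
        gray1 L (prefix_set (zeros i @ ones j) (Zset (n - i - j)))
        \<and> hd L = zeros i @ ones j @ False # pat001 (n - i - j - 1)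
        \<and> last L = zeros i @ ones j @ pat001 (n - i - j)))
  \<and> (i + j = n \<longrightarrow> prefix_list (zeros i @ ones j) (Zl (n - i - j)) = [zeros i @ ones j])
  \<and> (3 \<le> i + j \<and> i + j < n - 1 \<longrightarrow>
       (let L = prefix_list (zeros i @ ones (j + 1)) (Zl (n - i - j - 1))
                @ prefix_list (zeros i @ ones j) (Zl (n - i - j)) in
        gray1 L (prefix_set (zeros i @ ones (j + 1)) (Zset (n - i - j - 1))
                 \<union> prefix_set (zeros i @ ones j) (Zset (n - i - j)))
        \<and> hd L = zeros i @ ones (j + 1) @ False # pat001 (n - i - j - 2)
        \<and> last L = zeros i @ ones j @ pat001 (n - i - j)))
  \<and> (i + j + 1 = n \<longrightarrow>
       prefix_list (zeros i @ ones (j + 1)) (Zl (n - i - j - 1))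
                @ prefix_list (zeros i @ ones j) (Zl (n - i - j))
       = [zeros i @ ones (j + 1), zeros i @ ones j @ [False]])
  \<and> (3 \<le> i + j \<and> i + j < n \<longrightarrow>
       (let L = prefix_list (zeros i @ ones j) (Zl (n - i - j))
                @ rev (prefix_list (zeros (i - 1) @ ones (j + 1)) (Zl (n - i - j))) in
        gray1 L (prefix_set (zeros i @ ones j) (Zset (n - i - j))
                 \<union> prefix_set (zeros (i - 1) @ ones (j + 1)) (Zset (n - i - j)))
        \<and> hd L = zeros i @ ones j @ False # pat001 (n - i - j - 1)
        \<and> last L = zeros (i - 1) @ ones (j + 1) @ False # pat001 (n - i - j - 1)))
  \<and> (i + j = n \<longrightarrow>
       prefix_list (zeros i @ ones j) (Zl (n - i - j))
                @ rev (prefix_list (zeros (i - 1) @ ones (j + 1)) (Zl (n - i - j)))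
       = [zeros i @ ones j, zeros (i - 1) @ ones (j + 1)])
  \<and> (3 \<le> i + j \<and> i + j \<le> n \<longrightarrow>
       (let L = rev (prefix_list (zeros i @ ones j) (Zl (n - i - j)))
                @ prefix_list (zeros (i - 1) @ ones (j + 1)) (Zl (n - i - j)) in
        gray1 L (prefix_set (zeros i @ ones j) (Zset (n - i - j))
                 \<union> prefix_set (zeros (i - 1) @ ones (j + 1)) (Zset (n - i - j)))
        \<and> hd L = zeros i @ ones j @ pat001 (n - i - j)
        \<and> last L = zeros (i - 1) @ ones (j + 1) @ pat001 (n - i - j)))"
proof -
  define m where "m = n - i - j"
  have i1: "i \<ge> 1" using ij by simp
  define u1 where "u1 = zeros i @ ones j"
  define u2 where "u2 = zeros (i - 1) @ ones (j + 1)"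
  have ne: "Zl k \<noteq> []" if "k < n" for k using Zl_ne[OF Zg[OF that]] .
  have u12: "u1 @ y = zeros (i - 1) @ [False] @ (ones j @ y)"
            "u2 @ y = zeros (i - 1) @ [True] @ (ones j @ y)" for y
    using zo_split[OF i1, of j y] unfolding u1_def u2_def by auto
  have u12d: "dif1 (u1 @ y) (u2 @ y)" "dif1 (u2 @ y) (u1 @ y)" for y
    unfolding u12 by (rule dif1_mid)+
  have u12len: "length u1 = length u2" using i1 unfolding u1_def u2_def zeros_def ones_def by simp
  have u12neq: "u1 \<noteq> u2" using u12[of "[]"] by simp
  have disj12: "prefix_set u1 A \<inter> prefix_set u2 B = {}" for A B
    by (rule disj_same_len[OF u12len u12neq])
  have lastZ: "last (Zl m) = pat001 m" if "m < n"
  proof (cases "m = 0")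
    case True then show ?thesis by (simp add: Z0 pat001_def)
  next
    case False then show ?thesis using Zfl[of m] that by simp
  qed
  have P1: "3 \<le> i + j \<and> i + j < n \<longrightarrow>
       (let L = prefix_list (zeros i @ ones j) (Zl (n - i - j)) in
        gray1 L (prefix_set (zeros i @ ones j) (Zset (n - i - j)))
        \<and> hd L = zeros i @ ones j @ False # pat001 (n - i - j - 1)
        \<and> last L = zeros i @ ones j @ pat001 (n - i - j))"
  proof
    assume h: "3 \<le> i + j \<and> i + j < n"
    then have m1: "1 \<le> m" "m < n" unfolding m_def by auto
    show "let L = prefix_list (zeros i @ ones j) (Zl (n - i - j)) in
        gray1 L (prefix_set (zeros i @ ones j) (Zset (n - i - j)))
        \<and> hd L = zeros i @ ones j @ False # pat001 (n - i - j - 1)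
        \<and> last L = zeros i @ ones j @ pat001 (n - i - j)"
      unfolding Let_def m_def[symmetric]
      using gray1_prefix[OF Zg[OF m1(2)]] hd_pl[OF ne[OF m1(2)]] last_pl[OF ne[OF m1(2)]] Zfl[OF m1]
      by simp
  qed
  have P2: "i + j = n \<longrightarrow> prefix_list (zeros i @ ones j) (Zl (n - i - j)) = [zeros i @ ones j]"
    using Z0 pl_single by simp
  have P3: "3 \<le> i + j \<and> i + j < n - 1 \<longrightarrow>
       (let L = prefix_list (zeros i @ ones (j + 1)) (Zl (n - i - j - 1))
                @ prefix_list (zeros i @ ones j) (Zl (n - i - j)) in
        gray1 L (prefix_set (zeros i @ ones (j + 1)) (Zset (n - i - j - 1))
                 \<union> prefix_set (zeros i @ ones j) (Zset (n - i - j)))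
        \<and> hd L = zeros i @ ones (j + 1) @ False # pat001 (n - i - j - 2)
        \<and> last L = zeros i @ ones j @ pat001 (n - i - j))"
  proof
    assume h: "3 \<le> i + j \<and> i + j < n - 1"
    define m' where "m' = n - i - j - 1"
    have mm: "m = m' + 1" "1 \<le> m'" "m < n" "m' < n" "1 \<le> m" using h unfolding m_def m'_def by auto
    define x where "x = zeros i @ ones j"
    have e1: "zeros i @ ones (j + 1) = x @ [True]" unfolding x_def ones_Suc by simp
    define A where "A = prefix_list (x @ [True]) (Zl m')"
    define B where "B = prefix_list x (Zl m)"
    have gA: "gray1 A (prefix_set (x @ [True]) (Zset m'))" unfolding A_def
      by (rule gray1_prefix[OF Zg[OF mm(4)]])
    have gB: "gray1 B (prefix_set x (Zset m))" unfolding B_def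
      by (rule gray1_prefix[OF Zg[OF mm(3)]])
    have hdA: "hd A = x @ [True] @ False # pat001 (m' - 1)"
      unfolding A_def using hd_pl[OF ne[OF mm(4)]] Zfl[of m'] mm by simp
    have lastA: "last A = x @ [True] @ pat001 m'"
      unfolding A_def using last_pl[OF ne[OF mm(4)]] Zfl[of m'] mm by simp
    have hdB: "hd B = x @ [False] @ pat001 m'"
      unfolding B_def using hd_pl[OF ne[OF mm(3)]] Zfl[of m] mm by simp
    have lastB: "last B = x @ pat001 m"
      unfolding B_def using last_pl[OF ne[OF mm(3)]] Zfl[of m] mm by simp
    have disj: "prefix_set (x @ [True]) (Zset m') \<inter> prefix_set x (Zset m) = {}"
    proof -
      have "x @ [True] @ a \<noteq> x @ b" if "b \<in> Zset m" for a b
      proof -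
        have "b = False # tl b" using Zset_hd[OF that] mm by simp
        then obtain c where "b = False # c" by blast
        then show ?thesis by simp
      qed
      then show ?thesis unfolding prefix_set_def by auto
    qed
    have g: "gray1 (A @ B) (prefix_set (x @ [True]) (Zset m') \<union> prefix_set x (Zset m))"
      by (rule gray1_append[OF gA gB disj]) (simp only: lastA hdB dif1_mid)
    have ne2: "A \<noteq> []" "B \<noteq> []" unfolding A_def B_def
      by (rule ne_pl[OF ne[OF mm(4)]], rule ne_pl[OF ne[OF mm(3)]])
    show "let L = prefix_list (zeros i @ ones (j + 1)) (Zl (n - i - j - 1))
                @ prefix_list (zeros i @ ones j) (Zl (n - i - j)) in
        gray1 L (prefix_set (zeros i @ ones (j + 1)) (Zset (n - i - j - 1))
                 \<union> prefix_set (zeros i @ ones j) (Zset (n - i - j)))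
        \<and> hd L = zeros i @ ones (j + 1) @ False # pat001 (n - i - j - 2)
        \<and> last L = zeros i @ ones j @ pat001 (n - i - j)"
    proof -
      have eA: "prefix_list (zeros i @ ones (j + 1)) (Zl (n - i - j - 1)) = A"
        unfolding A_def e1 m'_def ..
      have eB: "prefix_list (zeros i @ ones j) (Zl (n - i - j)) = B"
        unfolding B_def x_def m_def ..
      have eS: "prefix_set (zeros i @ ones (j + 1)) (Zset (n - i - j - 1))
                 \<union> prefix_set (zeros i @ ones j) (Zset (n - i - j))
               = prefix_set (x @ [True]) (Zset m') \<union> prefix_set x (Zset m)"
        unfolding e1 m'_def m_def x_def ..
      have h1: "hd (A @ B) = zeros i @ ones (j + 1) @ False # pat001 (n - i - j - 2)"
      proof -
        have "m' - 1 = n - i - j - 2" unfolding m'_def by simp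
        then show ?thesis using ne2 hdA e1 by simp
      qed
      have h2: "last (A @ B) = zeros i @ ones j @ pat001 (n - i - j)"
        using ne2 lastB unfolding x_def m_def by simp
      show ?thesis unfolding Let_def eA eB eS using g h1 h2 by blast
    qed
  qed
  have P4: "i + j + 1 = n \<longrightarrow>
       prefix_list (zeros i @ ones (j + 1)) (Zl (n - i - j - 1))
                @ prefix_list (zeros i @ ones j) (Zl (n - i - j))
       = [zeros i @ ones (j + 1), zeros i @ ones j @ [False]]"
  proof
    assume h: "i + j + 1 = n"
    then have e: "n - i - j - 1 = 0" "n - i - j = 1" by auto
    have l1: "1 < n" using h ij by simp
    have g1: "gray1 (Zl 1) {[False]}" using Zg[OF l1] Zset1 by simp
    have "length (Zl 1) = 1"
      using g1 distinct_card[of "Zl 1"] unfolding gray1_def by simp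
    moreover have "hd (Zl 1) = [False]" using Zfl[of 1] l1 by (simp add: pat001_def)
    ultimately have "Zl 1 = [[False]]" by (cases "Zl 1") auto
    then show "prefix_list (zeros i @ ones (j + 1)) (Zl (n - i - j - 1))
                @ prefix_list (zeros i @ ones j) (Zl (n - i - j))
       = [zeros i @ ones (j + 1), zeros i @ ones j @ [False]]"
      unfolding e by (simp add: Z0 prefix_list_def)
  qed
  have P5: "3 \<le> i + j \<and> i + j < n \<longrightarrow>
       (let L = prefix_list (zeros i @ ones j) (Zl (n - i - j))
                @ rev (prefix_list (zeros (i - 1) @ ones (j + 1)) (Zl (n - i - j))) in
        gray1 L (prefix_set (zeros i @ ones j) (Zset (n - i - j))
                 \<union> prefix_set (zeros (i - 1) @ ones (j + 1)) (Zset (n - i - j)))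
        \<and> hd L = zeros i @ ones j @ False # pat001 (n - i - j - 1)
        \<and> last L = zeros (i - 1) @ ones (j + 1) @ False # pat001 (n - i - j - 1))"
  proof
    assume h: "3 \<le> i + j \<and> i + j < n"
    then have m1: "1 \<le> m" "m < n" unfolding m_def by auto
    define A where "A = prefix_list u1 (Zl m)"
    define B where "B = prefix_list u2 (Zl m)"
    have gA: "gray1 A (prefix_set u1 (Zset m))" unfolding A_def
      by (rule gray1_prefix[OF Zg[OF m1(2)]])
    have gB: "gray1 (rev B) (prefix_set u2 (Zset m))" unfolding B_def
      by (rule gray1_rev[OF gray1_prefix[OF Zg[OF m1(2)]]])
    have neAB: "A \<noteq> []" "B \<noteq> []" unfolding A_def B_def
      using ne_pl ne m1 by blast+
    have lA: "last A = u1 @ last (Zl m)" unfolding A_def using last_pl[OF ne[OF m1(2)]] .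
    have hA: "hd A = u1 @ hd (Zl m)" unfolding A_def using hd_pl[OF ne[OF m1(2)]] .
    have lB: "last B = u2 @ last (Zl m)" unfolding B_def using last_pl[OF ne[OF m1(2)]] .
    have hB: "hd B = u2 @ hd (Zl m)" unfolding B_def using hd_pl[OF ne[OF m1(2)]] .
    have g: "gray1 (A @ rev B) (prefix_set u1 (Zset m) \<union> prefix_set u2 (Zset m))"
      by (rule gray1_append[OF gA gB disj12]) (simp add: lA hd_rev lB u12d)
    show "let L = prefix_list (zeros i @ ones j) (Zl (n - i - j))
                @ rev (prefix_list (zeros (i - 1) @ ones (j + 1)) (Zl (n - i - j))) in
        gray1 L (prefix_set (zeros i @ ones j) (Zset (n - i - j))
                 \<union> prefix_set (zeros (i - 1) @ ones (j + 1)) (Zset (n - i - j)))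
        \<and> hd L = zeros i @ ones j @ False # pat001 (n - i - j - 1)
        \<and> last L = zeros (i - 1) @ ones (j + 1) @ False # pat001 (n - i - j - 1)"
      unfolding Let_def m_def[symmetric] u1_def[symmetric] u2_def[symmetric]
        A_def[symmetric] B_def[symmetric]
      using g neAB hA hB Zfl[OF m1] by (simp add: last_rev u1_def u2_def)
  qed
  have P6: "i + j = n \<longrightarrow>
       prefix_list (zeros i @ ones j) (Zl (n - i - j))
                @ rev (prefix_list (zeros (i - 1) @ ones (j + 1)) (Zl (n - i - j)))
       = [zeros i @ ones j, zeros (i - 1) @ ones (j + 1)]"
    using Z0 pl_single by simp
  have P7: "3 \<le> i + j \<and> i + j \<le> n \<longrightarrow>
       (let L = rev (prefix_list (zeros i @ ones j) (Zl (n - i - j)))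
                @ prefix_list (zeros (i - 1) @ ones (j + 1)) (Zl (n - i - j)) in
        gray1 L (prefix_set (zeros i @ ones j) (Zset (n - i - j))
                 \<union> prefix_set (zeros (i - 1) @ ones (j + 1)) (Zset (n - i - j)))
        \<and> hd L = zeros i @ ones j @ pat001 (n - i - j)
        \<and> last L = zeros (i - 1) @ ones (j + 1) @ pat001 (n - i - j))"
  proof
    assume h: "3 \<le> i + j \<and> i + j \<le> n"
    then have m1: "m < n" unfolding m_def by auto
    define A where "A = prefix_list u1 (Zl m)"
    define B where "B = prefix_list u2 (Zl m)"
    have gA: "gray1 (rev A) (prefix_set u1 (Zset m))" unfolding A_def
      by (rule gray1_rev[OF gray1_prefix[OF Zg[OF m1]]])
    have gB: "gray1 B (prefix_set u2 (Zset m))" unfolding B_def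
      by (rule gray1_prefix[OF Zg[OF m1]])
    have neAB: "A \<noteq> []" "B \<noteq> []" unfolding A_def B_def
      using ne_pl ne m1 by blast+
    have lA: "last A = u1 @ last (Zl m)" unfolding A_def using last_pl[OF ne[OF m1]] .
    have hA: "hd A = u1 @ hd (Zl m)" unfolding A_def using hd_pl[OF ne[OF m1]] .
    have lB: "last B = u2 @ last (Zl m)" unfolding B_def using last_pl[OF ne[OF m1]] .
    have hB: "hd B = u2 @ hd (Zl m)" unfolding B_def using hd_pl[OF ne[OF m1]] .
    have g: "gray1 (rev A @ B) (prefix_set u1 (Zset m) \<union> prefix_set u2 (Zset m))"
      by (rule gray1_append[OF gA gB disj12]) (simp add: last_rev hA hB u12d)
    show "let L = rev (prefix_list (zeros i @ ones j) (Zl (n - i - j)))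
                @ prefix_list (zeros (i - 1) @ ones (j + 1)) (Zl (n - i - j)) in
        gray1 L (prefix_set (zeros i @ ones j) (Zset (n - i - j))
                 \<union> prefix_set (zeros (i - 1) @ ones (j + 1)) (Zset (n - i - j)))
        \<and> hd L = zeros i @ ones j @ pat001 (n - i - j)
        \<and> last L = zeros (i - 1) @ ones (j + 1) @ pat001 (n - i - j)"
      unfolding Let_def m_def[symmetric] u1_def[symmetric] u2_def[symmetric]
        A_def[symmetric] B_def[symmetric]
      using g neAB lA lB lastZ[OF m1] by (simp add: hd_rev u1_def u2_def)
  qed
  show ?thesis using P1 P2 P3 P4 P5 P6 P7 by blast
qed

end
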